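(* Let $G=(V,E,w)$ be a finite undirected graph with positive vertex weights and $v\in V$, and run the confinement procedure from $v$ (with any choice of extending children at each step). (a) If $v$ is unconfined, then $v$ is sheathed (there is an MWIS of $G$ not containing $v$), and $\alpha_w(G[V\setminus\{v\}])=\alpha_w(G)$. (b) If $v$ is confined with confining set $S_v$, then either $v$ is sheathed or $S_v$ is contained in every MWIS of $G$. Moreover, if some $u\in S_v$ is also confined, with confining set $S_u$, and $v\in S_u$, then $\{u,v\}$ is a simultaneous set.
   Context: $G=(V,E,w)$: finite simple undirected graph, $w:V\to\mathbb{R}^{+}$, $w(S)=\sum_{x\in S}w(x)$. MWIS = maximum weight independent set; MWVC = minimum weight vertex cover. $N(S)=(\bigcup_{x\in S}N(x))\setminus S$, $N[S]=N(S)\cup S$; $G[S]$ is the induced subgraph, $\alpha_w(G[S])$ the maximum weight of an independent set of $G[S]$ ($0$ if $S=\emptyset$). A vertex is sheathed if it lies in some MWVC (equivalently, some MWIS avoids it). A set $X$ is a simultaneous set if either $X$ is contained in some MWIS or $X$ is contained in some MWVC. Child / extending child: for an independent set $S$, a vertex $u\in N(S)$ with $w(u)\ge w(S\cap N(u))$ is a child of $S$; a child $u$ is an extending child if there is exactly one independent set $S^*\subseteq N(u)\setminus N[S]$ with $w(u)<w(S\cap N(u))+w(S^* )$, and this $S^*$ is called a satellite set of $S$. Confinement procedure from $v$: start with $S:=\{v\}$ and repeat: (i) while $S$ has an extending child, add its satellite set to $S$; (ii) if some child $u$ of $S$ satisfies $w(u)\ge w(S\cap N(u))+\alpha_w(G[N(u)\setminus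 N[S]])$, halt and call $v$ unconfined; (iii) if no child of $S$ is an extending child, halt, call $v$ confined and call $S_v:=S$ its confining set. *)

theory Defs
  imports Complex_Main
begin

definition wgraph :: "'a set \<Rightarrow> ('a \<Rightarrow> 'a \<Rightarrow> bool) \<Rightarrow> ('a \<Rightarrow> real) \<Rightarrow> bool" where
  "wgraph V E w \<longleftrightarrow> finite V \<and> (\<forall>x y. E x y \<longrightarrow> x \<in> V \<and> y \<in> V)
     \<and> (\<forall>x y. E x y \<longrightarrow> E y x) \<and> (\<forall>x. \<not> E x x) \<and> (\<forall>x\<in>V. 0 < w x)"

definition nbr :: "('a \<Rightarrow> 'a \<Rightarrow> bool) \<Rightarrow> 'a \<Rightarrow> 'a set" where
  "nbr E x = {y. E x y}"

definition nbhd :: "('a \<Rightarrow> 'a \<Rightarrow> bool) \<Rightarrow> 'a set \<Rightarrow> 'a set" where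
  "nbhd E S = (\<Union>x\<in>S. nbr E x) - S"

definition cnbhd :: "('a \<Rightarrow> 'a \<Rightarrow> bool) \<Rightarrow> 'a set \<Rightarrow> 'a set" where
  "cnbhd E S = nbhd E S \<union> S"

definition indep :: "('a \<Rightarrow> 'a \<Rightarrow> bool) \<Rightarrow> 'a set \<Rightarrow> bool" where
  "indep E S \<longleftrightarrow> (\<forall>x\<in>S. \<forall>y\<in>S. \<not> E x y)"

text \<open>alpha_w(G[S]): maximum weight of an independent set of the induced subgraph G[S]
  (S finite; equals 0 for S empty).\<close>
definition alpha_w :: "('a \<Rightarrow> 'a \<Rightarrow> bool) \<Rightarrow> ('a \<Rightarrow> real) \<Rightarrow> 'a set \<Rightarrow> real" where
  "alpha_w E w S = Max ((\<lambda>I. sum w I) ` {I. I \<subseteq> S \<and> indep E I})"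

definition is_MWIS :: "'a set \<Rightarrow> ('a \<Rightarrow> 'a \<Rightarrow> bool) \<Rightarrow> ('a \<Rightarrow> real) \<Rightarrow> 'a set \<Rightarrow> bool" where
  "is_MWIS V E w I \<longleftrightarrow> I \<subseteq> V \<and> indep E I \<and>
     (\<forall>J. J \<subseteq> V \<and> indep E J \<longrightarrow> sum w J \<le> sum w I)"

definition vertex_cover :: "'a set \<Rightarrow> ('a \<Rightarrow> 'a \<Rightarrow> bool) \<Rightarrow> 'a set \<Rightarrow> bool" where
  "vertex_cover V E C \<longleftrightarrow> C \<subseteq> V \<and> (\<forall>x y. E x y \<longrightarrow> x \<in> C \<or> y \<in> C)"

definition is_MWVC :: "'a set \<Rightarrow> ('a \<Rightarrow> 'a \<Rightarrow> bool) \<Rightarrow> ('a \<Rightarrow> real) \<Rightarrow> 'a set \<Rightarrow> bool" where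
  "is_MWVC V E w C \<longleftrightarrow> vertex_cover V E C \<and>
     (\<forall>D. vertex_cover V E D \<longrightarrow> sum w C \<le> sum w D)"

definition sheathed :: "'a set \<Rightarrow> ('a \<Rightarrow> 'a \<Rightarrow> bool) \<Rightarrow> ('a \<Rightarrow> real) \<Rightarrow> 'a \<Rightarrow> bool" where
  "sheathed V E w v \<longleftrightarrow> (\<exists>C. is_MWVC V E w C \<and> v \<in> C)"

definition simultaneous :: "'a set \<Rightarrow> ('a \<Rightarrow> 'a \<Rightarrow> bool) \<Rightarrow> ('a \<Rightarrow> real) \<Rightarrow> 'a set \<Rightarrow> bool" where
  "simultaneous V E w X \<longleftrightarrow>
     (\<exists>I. is_MWIS V E w I \<and> X \<subseteq> I) \<or> (\<exists>C. is_MWVC V E w C \<and> X \<subseteq> C)"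

definition child :: "('a \<Rightarrow> 'a \<Rightarrow> bool) \<Rightarrow> ('a \<Rightarrow> real) \<Rightarrow> 'a set \<Rightarrow> 'a \<Rightarrow> bool" where
  "child E w S u \<longleftrightarrow> u \<in> nbhd E S \<and> sum w (S \<inter> nbr E u) \<le> w u"

definition satellite_cand :: "('a \<Rightarrow> 'a \<Rightarrow> bool) \<Rightarrow> ('a \<Rightarrow> real) \<Rightarrow> 'a set \<Rightarrow> 'a \<Rightarrow> 'a set \<Rightarrow> bool" where
  "satellite_cand E w S u T \<longleftrightarrow> T \<subseteq> nbr E u - cnbhd E S \<and> indep E T \<and>
     w u < sum w (S \<inter> nbr E u) + sum w T"

definition extending_child :: "('a \<Rightarrow> 'a \<Rightarrow> bool) \<Rightarrow> ('a \<Rightarrow> real) \<Rightarrow> 'a set \<Rightarrow> 'a \<Rightarrow> bool" where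
  "extending_child E w S u \<longleftrightarrow> child E w S u \<and> (\<exists>!T. satellite_cand E w S u T)"

text \<open>States reachable by the confinement procedure from v via step (i),
  with an arbitrary choice of extending child at each step.\<close>
inductive conf_reach :: "('a \<Rightarrow> 'a \<Rightarrow> bool) \<Rightarrow> ('a \<Rightarrow> real) \<Rightarrow> 'a \<Rightarrow> 'a set \<Rightarrow> bool"
  for E w v where
  start: "conf_reach E w v {v}"
| step: "conf_reach E w v S \<Longrightarrow> extending_child E w S u \<Longrightarrow> satellite_cand E w S u T
          \<Longrightarrow> conf_reach E w v (S \<union> T)"

definition unconfining_child :: "('a \<Rightarrow> 'a \<Rightarrow> bool) \<Rightarrow> ('a \<Rightarrow> real) \<Rightarrow> 'a set \<Rightarrow> 'a \<Rightarrow> bool" where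
  "unconfining_child E w S u \<longleftrightarrow> child E w S u \<and>
     sum w (S \<inter> nbr E u) + alpha_w E w (nbr E u - cnbhd E S) \<le> w u"

definition halts_unconfined :: "('a \<Rightarrow> 'a \<Rightarrow> bool) \<Rightarrow> ('a \<Rightarrow> real) \<Rightarrow> 'a \<Rightarrow> 'a set \<Rightarrow> bool" where
  "halts_unconfined E w v S \<longleftrightarrow> conf_reach E w v S \<and> (\<forall>u. \<not> extending_child E w S u)
     \<and> (\<exists>u. unconfining_child E w S u)"

definition halts_confined :: "('a \<Rightarrow> 'a \<Rightarrow> bool) \<Rightarrow> ('a \<Rightarrow> real) \<Rightarrow> 'a \<Rightarrow> 'a set \<Rightarrow> bool" where
  "halts_confined E w v S \<longleftrightarrow> conf_reach E w v S \<and> (\<forall>u. \<not> extending_child E w S u)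
     \<and> \<not> (\<exists>u. unconfining_child E w S u)"

end

theory Submission
  imports Defs
begin

lemma wg: assumes "wgraph V E w"
  shows "finite V" "\<And>x y. E x y \<Longrightarrow> x \<in> V" "\<And>x y. E x y \<Longrightarrow> y \<in> V"
    "\<And>x y. E x y \<Longrightarrow> E y x" "\<And>x. \<not> E x x" "\<And>x. x \<in> V \<Longrightarrow> 0 < w x"
  using assms unfolding wgraph_def by blast+

lemma mwvc_compl:
  assumes g: "wgraph V E w" and I: "is_MWIS V E w I"
  shows "is_MWVC V E w (V - I)"
proof -
  have IV: "I \<subseteq> V" and ind: "indep E I" and mx: "\<And>J. J \<subseteq> V \<Longrightarrow> indep E J \<Longrightarrow> sum w J \<le> sum w I"
    using I unfolding is_MWIS_def by auto
  have fin: "finite V" using wg[OF g] by blast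
  have vc: "vertex_cover V E (V - I)"
    unfolding vertex_cover_def using ind wg[OF g] unfolding indep_def by blast
  have "sum w (V - I) \<le> sum w D" if D: "vertex_cover V E D" for D
  proof -
    have DV: "D \<subseteq> V" using D unfolding vertex_cover_def by blast
    have "indep E (V - D)" using D unfolding vertex_cover_def indep_def by blast
    then have "sum w (V - D) \<le> sum w I" using mx by blast
    moreover have "sum w (V - D) = sum w V - sum w D" using DV fin by (simp add: sum_diff)
    moreover have "sum w (V - I) = sum w V - sum w I" using IV fin by (simp add: sum_diff)
    ultimately show ?thesis by linarith
  qed
  then show ?thesis using vc unfolding is_MWVC_def by blast
qed

lemma sheathed_if:
  assumes "wgraph V E w" "is_MWIS V E w I" "v \<notin> I" "v \<in> V"
  shows "sheathed V E w v"
  using mwvc_compl[OF assms(1,2)] assms(3,4) unfolding sheathed_def by blast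

lemma alpha_props:
  assumes fin: "finite X"
  shows "\<And>T. T \<subseteq> X \<Longrightarrow> indep E T \<Longrightarrow> sum w T \<le> alpha_w E w X"
    and "\<exists>I. I \<subseteq> X \<and> indep E I \<and> sum w I = alpha_w E w X"
proof -
  have f: "finite ((\<lambda>I. sum w I) ` {I. I \<subseteq> X \<and> indep E I})"
    using fin by simp
  have ne: "{} \<in> {I. I \<subseteq> X \<and> indep E I}" unfolding indep_def by simp
  show "\<And>T. T \<subseteq> X \<Longrightarrow> indep E T \<Longrightarrow> sum w T \<le> alpha_w E w X"
    unfolding alpha_w_def using f by (intro Max_ge) auto
  have "alpha_w E w X \<in> (\<lambda>I. sum w I) ` {I. I \<subseteq> X \<and> indep E I}"
    unfolding alpha_w_def using f ne by (intro Max_in) auto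
  then show "\<exists>I. I \<subseteq> X \<and> indep E I \<and> sum w I = alpha_w E w X" by auto
qed

lemma exists_MWIS:
  assumes g: "wgraph V E w" shows "\<exists>I. is_MWIS V E w I"
proof -
  have fin: "finite V" using wg[OF g] by blast
  obtain I where "I \<subseteq> V" "indep E I" "sum w I = alpha_w E w V"
    using alpha_props(2)[OF fin] by blast
  moreover have "\<forall>J. J \<subseteq> V \<and> indep E J \<longrightarrow> sum w J \<le> alpha_w E w V"
    using alpha_props(1)[OF fin, where E=E and w=w] by blast
  ultimately show ?thesis unfolding is_MWIS_def by auto
qed

lemma alpha_MWIS:
  assumes g: "wgraph V E w" and I: "is_MWIS V E w I"
  shows "alpha_w E w V = sum w I"
proof -
  have fin: "finite V" using wg[OF g] by blast
  obtain J where "J \<subseteq> V" "indep E J" "sum w J = alpha_w E w V"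
    using alpha_props(2)[OF fin] by blast
  moreover have "sum w I \<le> alpha_w E w V" using alpha_props(1)[OF fin, where E=E and w=w] I unfolding is_MWIS_def by simp
  moreover have "sum w J \<le> sum w I" using I \<open>J \<subseteq> V\<close> \<open>indep E J\<close> unfolding is_MWIS_def by simp
  ultimately show ?thesis by linarith
qed

lemma swap:
  assumes g: "wgraph V E w" and I: "is_MWIS V E w I" and SI: "S \<subseteq> I"
    and x: "x \<in> nbhd E S"
    and wx: "sum w (S \<inter> nbr E x) + sum w (I \<inter> nbr E x - cnbhd E S) \<le> w x"
  shows "is_MWIS V E w ((I - nbr E x) \<union> {x})"
proof -
  have IV: "I \<subseteq> V" and ind: "indep E I" and mx: "\<And>J. J \<subseteq> V \<Longrightarrow> indep E J \<Longrightarrow> sum w J \<le> sum w I"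
    using I unfolding is_MWIS_def by auto
  have fin: "finite V" using wg[OF g] by blast
  hence finI: "finite I" using IV finite_subset by blast
  obtain s where s: "s \<in> S" "E s x" "x \<notin> S" using x unfolding nbhd_def nbr_def by blast
  have xV: "x \<in> V" using s wg[OF g] by blast
  have xI: "x \<notin> I" using s SI ind unfolding indep_def by blast
  have ind2: "indep E ((I - nbr E x) \<union> {x})"
    using ind wg(4,5)[OF g] unfolding indep_def nbr_def by blast
  have split: "I \<inter> nbr E x = (S \<inter> nbr E x) \<union> (I \<inter> nbr E x - cnbhd E S)"
  proof
    show "I \<inter> nbr E x \<subseteq> S \<inter> nbr E x \<union> (I \<inter> nbr E x - cnbhd E S)"
    proof
      fix y assume y: "y \<in> I \<inter> nbr E x"
      show "y \<in> S \<inter> nbr E x \<union> (I \<inter> nbr E x - cnbhd E S)"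
      proof (cases "y \<in> S")
        case False
        have "y \<notin> nbhd E S"
        proof
          assume "y \<in> nbhd E S"
          then obtain t where "t \<in> S" "E t y" unfolding nbhd_def nbr_def by blast
          then show False using y SI ind unfolding indep_def by blast
        qed
        then show ?thesis using y False unfolding cnbhd_def by blast
      qed (use y in blast)
    qed
  qed (use SI in \<open>auto simp: cnbhd_def\<close>)
  have disj: "(S \<inter> nbr E x) \<inter> (I \<inter> nbr E x - cnbhd E S) = {}" unfolding cnbhd_def by blast
  have f1: "finite (S \<inter> nbr E x)" using finI SI by (meson finite_Int finite_subset)
  have f2: "finite (I \<inter> nbr E x - cnbhd E S)" using finI by simp
  have e1: "sum w (I \<inter> nbr E x) = sum w (S \<inter> nbr E x) + sum w (I \<inter> nbr E x - cnbhd E S)"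
    using arg_cong[OF split, of "sum w"] sum.union_disjoint[OF f1 f2 disj] by (rule trans)
  have e2: "sum w I = sum w (I - (I \<inter> nbr E x)) + sum w (I \<inter> nbr E x)"
    using sum.subset_diff[of "I \<inter> nbr E x" I w] finI by simp
  have e3: "I - (I \<inter> nbr E x) = I - nbr E x" by blast
  have e4: "sum w ((I - nbr E x) \<union> {x}) = sum w (I - nbr E x) + w x"
    using finI xI by simp
  have ge: "sum w I \<le> sum w ((I - nbr E x) \<union> {x})" using wx e1 e2[unfolded e3] e4 by linarith
  have sub: "(I - nbr E x) \<union> {x} \<subseteq> V" using IV xV by blast
  show ?thesis unfolding is_MWIS_def
  proof (intro conjI allI impI sub ind2)
    fix J assume "J \<subseteq> V \<and> indep E J"
    then have "sum w J \<le> sum w I" using mx by blast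
    then show "sum w J \<le> sum w ((I - nbr E x) \<union> {x})" using ge by linarith
  qed
qed


lemma reach_sub:
  assumes g: "wgraph V E w" and u: "u \<in> V"
  shows "conf_reach E w u S \<Longrightarrow> S \<subseteq> V"
proof (induction rule: conf_reach.induct)
  case start then show ?case using u by simp
next
  case (step S x T)
  have "T \<subseteq> nbr E x" using step.hyps(3) unfolding satellite_cand_def by blast
  then have "T \<subseteq> V" using wg[OF g] unfolding nbr_def by blast
  then show ?case using step.IH by blast
qed

lemma stepB:
  assumes g: "wgraph V E w"
  shows "conf_reach E w u S \<Longrightarrow> is_MWIS V E w I \<Longrightarrow> u \<in> I \<Longrightarrow>
    S \<subseteq> I \<or> (\<exists>I'. is_MWIS V E w I' \<and> I' - I \<subseteq> nbhd E S \<and> I' \<inter> S \<subset> I \<inter> S)"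
proof (induction rule: conf_reach.induct)
  case start then show ?case by simp
next
  case (step S x T)
  have Tsub: "T \<subseteq> nbr E x - cnbhd E S" and Tind: "indep E T"
    and Tw: "w x < sum w (S \<inter> nbr E x) + sum w T"
    using step.hyps(3) unfolding satellite_cand_def by auto
  have ch: "child E w S x" and uniq: "\<exists>!T. satellite_cand E w S x T"
    using step.hyps(2) unfolding extending_child_def by auto
  have xN: "x \<in> nbhd E S" using ch unfolding child_def by blast
  have xT: "x \<notin> T" using Tsub wg(5)[OF g] unfolding nbr_def by blast
  have TN: "T \<inter> nbhd E S = {}" using Tsub unfolding cnbhd_def by blast
  have nbS: "nbhd E S - T \<subseteq> nbhd E (S \<union> T)" unfolding nbhd_def by blast
  from step.IH[OF step.prems] show ?case
  proof
    assume SI: "S \<subseteq> I"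
    show ?thesis
    proof (cases "T \<subseteq> I")
      case True then show ?thesis using SI by blast
    next
      case False
      define TI where "TI = I \<inter> nbr E x - cnbhd E S"
      have ind: "indep E I" using step.prems unfolding is_MWIS_def by blast
      have "\<not> satellite_cand E w S x TI"
      proof
        assume "satellite_cand E w S x TI"
        then have "TI = T" using uniq step.hyps(3) by blast
        then show False using False unfolding TI_def by blast
      qed
      moreover have "TI \<subseteq> nbr E x - cnbhd E S" "indep E TI"
        using ind unfolding TI_def indep_def by auto
      ultimately have wle: "sum w (S \<inter> nbr E x) + sum w TI \<le> w x"
        unfolding satellite_cand_def by auto
      have I': "is_MWIS V E w ((I - nbr E x) \<union> {x})"
        using swap[OF g step.prems(1) SI xN] wle unfolding TI_def by blast
      obtain s where s: "s \<in> S" "E s x" using xN unfolding nbhd_def nbr_def by blast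
      have sx: "s \<in> nbr E x" using s wg(4)[OF g] unfolding nbr_def by blast
      have xS: "x \<notin> S" using xN unfolding nbhd_def by blast
      have "((I - nbr E x) \<union> {x}) - I \<subseteq> nbhd E (S \<union> T)"
        using xN xT nbS by blast
      moreover have "((I - nbr E x) \<union> {x}) \<inter> (S \<union> T) \<subset> I \<inter> (S \<union> T)"
        using xS xT s sx SI by blast
      ultimately show ?thesis using I' by blast
    qed
  next
    assume "\<exists>I'. is_MWIS V E w I' \<and> I' - I \<subseteq> nbhd E S \<and> I' \<inter> S \<subset> I \<inter> S"
    then obtain I' where I': "is_MWIS V E w I'" "I' - I \<subseteq> nbhd E S" "I' \<inter> S \<subset> I \<inter> S" by blast
    have "I' - I \<subseteq> nbhd E (S \<union> T)" using I'(2) TN nbS by blast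
    moreover have "I' \<inter> (S \<union> T) \<subset> I \<inter> (S \<union> T)"
    proof -
      have "I' \<inter> T \<subseteq> I \<inter> T" using I'(2) TN by blast
      then show ?thesis using I'(3) by blast
    qed
    ultimately show ?thesis using I'(1) by blast
  qed
qed

lemma lemA:
  assumes g: "wgraph V E w" and r: "conf_reach E w v S"
    and all: "\<forall>I. is_MWIS V E w I \<longrightarrow> v \<in> I"
  shows "\<forall>I. is_MWIS V E w I \<longrightarrow> S \<subseteq> I"
proof -
  have "\<forall>I. is_MWIS V E w I \<and> card (I \<inter> S) = n \<longrightarrow> S \<subseteq> I" for n
  proof (induction n rule: less_induct)
    case (less n)
    show ?case
    proof (intro allI impI)
      fix I assume I: "is_MWIS V E w I \<and> card (I \<inter> S) = n"
      have fin: "finite (I \<inter> S)" using I wg(1)[OF g] unfolding is_MWIS_def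
        by (meson finite_Int finite_subset)
      show "S \<subseteq> I"
      proof (rule ccontr)
        assume nS: "\<not> S \<subseteq> I"
        then obtain I' where I': "is_MWIS V E w I'" "I' \<inter> S \<subset> I \<inter> S"
          using stepB[OF g r, of I] I all by blast
        have "card (I' \<inter> S) < n" using psubset_card_mono[OF fin I'(2)] I by simp
        then have "S \<subseteq> I'" using less.IH I'(1) by blast
        then show False using I'(2) by blast
      qed
    qed
  qed
  then show ?thesis by blast
qed

lemma lemC:
  assumes g: "wgraph V E w" and r: "conf_reach E w u Su" and vS: "v \<in> Su"
  shows "\<forall>I. is_MWIS V E w I \<and> v \<notin> I \<and> card (I \<inter> Su) = n \<longrightarrow>
     (\<exists>J. is_MWIS V E w J \<and> u \<notin> J \<and> v \<notin> J)"
proof (induction n rule: less_induct)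
  case (less n)
  show ?case
  proof (intro allI impI)
    fix I assume I: "is_MWIS V E w I \<and> v \<notin> I \<and> card (I \<inter> Su) = n"
    have fin: "finite (I \<inter> Su)" using I wg(1)[OF g] unfolding is_MWIS_def
      by (meson finite_Int finite_subset)
    show "\<exists>J. is_MWIS V E w J \<and> u \<notin> J \<and> v \<notin> J"
    proof (cases "u \<in> I")
      case False then show ?thesis using I by blast
    next
      case True
      have "\<not> Su \<subseteq> I" using I vS by blast
      then obtain I' where I': "is_MWIS V E w I'" "I' - I \<subseteq> nbhd E Su" "I' \<inter> Su \<subset> I \<inter> Su"
        using stepB[OF g r, of I] I True by blast
      have "v \<notin> nbhd E Su" using vS unfolding nbhd_def by blast
      then have vI': "v \<notin> I'" using I'(2) I by blast
      have "card (I' \<inter> Su) < n" using psubset_card_mono[OF fin I'(3)] I by simp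
      then show ?thesis using less.IH I'(1) vI' by blast
    qed
  qed
qed

theorem corollary3p3:
  fixes V :: "'a set" and E :: "'a \<Rightarrow> 'a \<Rightarrow> bool" and w :: "'a \<Rightarrow> real" and v :: 'a
  assumes "wgraph V E w" and "v \<in> V"
  shows "(\<forall>S. halts_unconfined E w v S \<longrightarrow>
            sheathed V E w v \<and> (\<exists>I. is_MWIS V E w I \<and> v \<notin> I) \<and>
            alpha_w E w (V - {v}) = alpha_w E w V)
       \<and> (\<forall>Sv. halts_confined E w v Sv \<longrightarrow>
            (sheathed V E w v \<or> (\<forall>I. is_MWIS V E w I \<longrightarrow> Sv \<subseteq> I)) \<and>
            (\<forall>u Su. u \<in> Sv \<and> halts_confined E w u Su \<and> v \<in> Su \<longrightarrow>
               simultaneous V E w {u, v}))"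
proof (intro conjI allI impI)
  note g = assms(1)
  have fin: "finite V" using wg[OF g] by blast
  fix S assume h: "halts_unconfined E w v S"
  have r: "conf_reach E w v S" using h unfolding halts_unconfined_def by blast
  obtain x where x: "unconfining_child E w S x" using h unfolding halts_unconfined_def by blast
  have ex: "\<exists>I. is_MWIS V E w I \<and> v \<notin> I"
  proof (rule ccontr)
    assume "\<not> ?thesis"
    then have all: "\<forall>I. is_MWIS V E w I \<longrightarrow> S \<subseteq> I" using lemA[OF g r] by blast
    obtain I where I: "is_MWIS V E w I" using exists_MWIS[OF g] by blast
    have SI: "S \<subseteq> I" using all I by blast
    have xN: "x \<in> nbhd E S" and xw: "sum w (S \<inter> nbr E x) + alpha_w E w (nbr E x - cnbhd E S) \<le> w x"
      using x unfolding unconfining_child_def child_def by auto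
    obtain s where s: "s \<in> S" "E s x" using xN unfolding nbhd_def nbr_def by blast
    have xV: "x \<in> V" using s wg[OF g] by blast
    have finR: "finite (nbr E x - cnbhd E S)"
      using fin wg(3)[OF g] unfolding nbr_def by (metis (no_types, lifting) finite_Diff mem_Collect_eq rev_finite_subset subsetI)
    have indI: "indep E I" using I unfolding is_MWIS_def by blast
    have "sum w (I \<inter> nbr E x - cnbhd E S) \<le> alpha_w E w (nbr E x - cnbhd E S)"
      using indI by (intro alpha_props(1)[OF finR]) (auto simp: indep_def)
    then have I': "is_MWIS V E w ((I - nbr E x) \<union> {x})"
      using swap[OF g I SI xN] xw by linarith
    have "S \<subseteq> (I - nbr E x) \<union> {x}" using all I' by blast
    moreover have "s \<in> nbr E x" using s wg(4)[OF g] unfolding nbr_def by blast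
    moreover have "s \<noteq> x" using s wg(5)[OF g] by blast
    ultimately show False using s by blast
  qed
  then obtain I where I: "is_MWIS V E w I" "v \<notin> I" by blast
  show "\<exists>I. is_MWIS V E w I \<and> v \<notin> I" using ex .
  show "sheathed V E w v" using sheathed_if[OF g I assms(2)] .
  have IV: "I \<subseteq> V - {v}" "indep E I" using I unfolding is_MWIS_def by auto
  have finV': "finite (V - {v})" using fin by simp
  have a1: "sum w I \<le> alpha_w E w (V - {v})" using alpha_props(1)[OF finV'] IV by blast
  obtain J where J: "J \<subseteq> V - {v}" "indep E J" "sum w J = alpha_w E w (V - {v})"
    using alpha_props(2)[OF finV'] by blast
  have "sum w J \<le> sum w I" using I(1) J unfolding is_MWIS_def by blast
  then show "alpha_w E w (V - {v}) = alpha_w E w V"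
    using a1 J(3) alpha_MWIS[OF g I(1)] by linarith
next
  note g = assms(1)
  fix Sv assume h: "halts_confined E w v Sv"
  have r: "conf_reach E w v Sv" using h unfolding halts_confined_def by blast
  show "sheathed V E w v \<or> (\<forall>I. is_MWIS V E w I \<longrightarrow> Sv \<subseteq> I)"
  proof (cases "\<exists>I. is_MWIS V E w I \<and> v \<notin> I")
    case True then show ?thesis using sheathed_if[OF g _ _ assms(2)] by blast
  next
    case False then show ?thesis using lemA[OF g r] by blast
  qed
  fix u Su assume hu: "u \<in> Sv \<and> halts_confined E w u Su \<and> v \<in> Su"
  have ru: "conf_reach E w u Su" using hu unfolding halts_confined_def by blast
  have uV: "u \<in> V" using reach_sub[OF g assms(2) r] hu by blast
  show "simultaneous V E w {u, v}"
  proof (cases "\<exists>I. is_MWIS V E w I \<and> v \<notin> I")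
    case False
    then have "\<forall>I. is_MWIS V E w I \<longrightarrow> Sv \<subseteq> I" using lemA[OF g r] by blast
    moreover obtain I where "is_MWIS V E w I" using exists_MWIS[OF g] by blast
    ultimately show ?thesis using hu r unfolding simultaneous_def
      by (metis False insert_subset subsetD empty_subsetI)
  next
    case True
    then obtain I where I: "is_MWIS V E w I" "v \<notin> I" by blast
    obtain J where J: "is_MWIS V E w J" "u \<notin> J" "v \<notin> J"
      using lemC[OF g ru, of v] hu I by blast
    have "is_MWVC V E w (V - J)" using mwvc_compl[OF g J(1)] .
    moreover have "{u, v} \<subseteq> V - J" using J uV assms(2) by blast
    ultimately show ?thesis unfolding simultaneous_def by blast
  qed
qed

end
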